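(* Let $\gamma>0$, $c_u>0$, $c_a>0$, $c_s>0$ and $R^*=\log\left(\frac{c_u}{c_a}+1\right)$. The bi-level game described in the context admits a unique bi-level game Nash equilibrium $(p_u^*,p_a^*,\{s^*,T^*\})$, namely $$(p_u^*,p_a^*,\{s^*,T^*\})=\left(0,\,0,\,\left\{1,\ \log\left(\tfrac{c_u}{c_a}+1\right)\right\}\right).$$
   Context: $\log$ is the natural logarithm. Lower level: given a coverage level $s\in[0,1]$, a user chooses $p_u\in[0,1]$ and an attacker $p_a\in[0,1]$ in a zero-sum game with objective $K(p_u,p_a,s)=\gamma(1-s)\log\left(\frac{p_a}{p_u}+1\right)+c_up_u-c_ap_a$ (user minimizes, attacker maximizes) on the feasible set $\mathcal{S}_{u,a}(s)=\{(p_u,p_a)\in[0,1]^2:1-\gamma(1-s)\log(p_a/p_u+1)>0\}$. Conventions: when $s=1$ the term $\gamma(1-s)\log(p_a/p_u+1)$ is taken to be $0$ (all pairs feasible); when $s<1$, pairs with $p_u=0$ are regarded infeasible. A pair $(p_u^*,p_a^* )\in\mathcal{S}_{u,a}(s)$ is a saddle-point equilibrium (SPE) if $K(p_u^*,p_a,s)\le K(p_u^*,p_a^*,s)\le K(p_u,p_a^*,s)$ for all $p_a$ with $(p_u^*,p_a)\in\mathcal{S}_{u,a}(s)$ and all $p_u$ with $(p_u,p_a^* )\in\mathcal{S}_{u,a}(s)$. Upper level: the insurer chooses $(s,T)$, $0\le s\le1$, $T\ge0$, to minimize $J_i(s,T)=\gamma(1-s)R^*+c_s(sR^*-T)$ subject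 to $T\le R^*$, $s\ge T/R^*$, $T-sR^*\ge0$, and $s>1-\frac{1}{\gamma R^*}$. A tuple $(p_u^*,p_a^*,\{s^*,T^*\})$ is a bi-level game Nash equilibrium (BGNE) if $(s^*,T^* )$ solves the insurer's problem and $(p_u^*,p_a^* )$ is an SPE of the zero-sum game at coverage level $s=s^*$. *)

theory Defs
  imports Complex_Main
begin

definition risk_term :: "real \<Rightarrow> real \<Rightarrow> real \<Rightarrow> real \<Rightarrow> real" where
  "risk_term \<gamma> s pu pa = (if s = 1 then 0 else \<gamma> * (1 - s) * ln (pa / pu + 1))"

definition K :: "real \<Rightarrow> real \<Rightarrow> real \<Rightarrow> real \<Rightarrow> real \<Rightarrow> real \<Rightarrow> real" where
  "K \<gamma> cu ca pu pa s = risk_term \<gamma> s pu pa + cu * pu - ca * pa"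

definition feasible_ua :: "real \<Rightarrow> real \<Rightarrow> real \<Rightarrow> real \<Rightarrow> bool" where
  "feasible_ua \<gamma> s pu pa \<longleftrightarrow>
     pu \<in> {0..1} \<and> pa \<in> {0..1} \<and> (s < 1 \<longrightarrow> pu \<noteq> 0) \<and>
     1 - risk_term \<gamma> s pu pa > 0"

definition is_SPE :: "real \<Rightarrow> real \<Rightarrow> real \<Rightarrow> real \<Rightarrow> real \<Rightarrow> real \<Rightarrow> bool" where
  "is_SPE \<gamma> cu ca s pu pa \<longleftrightarrow>
     feasible_ua \<gamma> s pu pa \<and>
     (\<forall>pa'. feasible_ua \<gamma> s pu pa' \<longrightarrow> K \<gamma> cu ca pu pa' s \<le> K \<gamma> cu ca pu pa s) \<and>
     (\<forall>pu'. feasible_ua \<gamma> s pu' pa \<longrightarrow> K \<gamma> cu ca pu pa s \<le> K \<gamma> cu ca pu' pa s)"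

definition J_ins :: "real \<Rightarrow> real \<Rightarrow> real \<Rightarrow> real \<Rightarrow> real \<Rightarrow> real" where
  "J_ins \<gamma> cs R s T = \<gamma> * (1 - s) * R + cs * (s * R - T)"

definition insurer_feasible :: "real \<Rightarrow> real \<Rightarrow> real \<Rightarrow> real \<Rightarrow> bool" where
  "insurer_feasible \<gamma> R s T \<longleftrightarrow>
     0 \<le> s \<and> s \<le> 1 \<and> T \<ge> 0 \<and> T \<le> R \<and> s \<ge> T / R \<and> T - s * R \<ge> 0 \<and>
     s > 1 - 1 / (\<gamma> * R)"

definition insurer_optimal :: "real \<Rightarrow> real \<Rightarrow> real \<Rightarrow> real \<Rightarrow> real \<Rightarrow> bool" where
  "insurer_optimal \<gamma> cs R s T \<longleftrightarrow>
     insurer_feasible \<gamma> R s T \<and>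
     (\<forall>s' T'. insurer_feasible \<gamma> R s' T' \<longrightarrow> J_ins \<gamma> cs R s T \<le> J_ins \<gamma> cs R s' T')"

definition is_BGNE :: "real \<Rightarrow> real \<Rightarrow> real \<Rightarrow> real \<Rightarrow> real \<Rightarrow> real \<Rightarrow> real \<Rightarrow> real \<Rightarrow> real \<Rightarrow> bool" where
  "is_BGNE \<gamma> cu ca cs R pu pa s T \<longleftrightarrow>
     insurer_optimal \<gamma> cs R s T \<and> is_SPE \<gamma> cu ca s pu pa"

end

theory Submission
  imports Defs
begin

theorem proposition5:
  fixes \<gamma> cu ca cs R :: real
  assumes "\<gamma> > 0" and "cu > 0" and "ca > 0" and "cs > 0"
    and "R = ln (cu / ca + 1)"
  shows "{(pu, pa, s, T). is_BGNE \<gamma> cu ca cs R pu pa s T} = {(0, 0, 1, ln (cu / ca + 1))}"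
proof -
  have "cu / ca > 0" using assms by simp
  hence Rpos: "R > 0" using assms(5) by simp
  have gR: "\<gamma> * R > 0" using Rpos assms(1) by simp
  have feas1: "insurer_feasible \<gamma> R 1 R"
    unfolding insurer_feasible_def using Rpos gR by simp
  have J1: "J_ins \<gamma> cs R 1 R = 0" unfolding J_ins_def by simp
  have fe1: "\<And>pu pa. feasible_ua \<gamma> 1 pu pa \<longleftrightarrow> pu \<in> {0..1} \<and> pa \<in> {0..1}"
    unfolding feasible_ua_def risk_term_def by simp
  have K1: "\<And>pu pa. K \<gamma> cu ca pu pa 1 = cu * pu - ca * pa"
    unfolding K_def risk_term_def by simp
  have fwd: "pu = 0 \<and> pa = 0 \<and> s = 1 \<and> T = R" if B: "is_BGNE \<gamma> cu ca cs R pu pa s T" for pu pa s T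
  proof -
    from B have opt: "insurer_optimal \<gamma> cs R s T" and spe: "is_SPE \<gamma> cu ca s pu pa"
      unfolding is_BGNE_def by auto
    from opt have F: "insurer_feasible \<gamma> R s T" and
      le: "J_ins \<gamma> cs R s T \<le> J_ins \<gamma> cs R 1 R"
      unfolding insurer_optimal_def using feas1 by auto
    from F have "T \<ge> s * R" "s \<ge> T / R" "s \<le> 1" unfolding insurer_feasible_def by auto
    hence "s * R \<ge> T" using Rpos by (simp add: divide_le_eq)
    with \<open>T \<ge> s * R\<close> have TsR: "T = s * R" by simp
    from le J1 have "\<gamma> * (1 - s) * R \<le> 0" unfolding J_ins_def using TsR by simp
    hence "(1 - s) * (\<gamma> * R) \<le> 0" by (simp add: algebra_simps)
    hence "1 - s \<le> 0" using gR by (smt (verit) mult_pos_pos)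
    hence s1: "s = 1" using \<open>s \<le> 1\<close> by simp
    with TsR have T: "T = R" by simp
    from spe s1 have S1: "is_SPE \<gamma> cu ca 1 pu pa" by simp
    hence F1: "feasible_ua \<gamma> 1 pu pa"
      and A: "\<forall>pa'. feasible_ua \<gamma> 1 pu pa' \<longrightarrow> K \<gamma> cu ca pu pa' 1 \<le> K \<gamma> cu ca pu pa 1"
      and U: "\<forall>pu'. feasible_ua \<gamma> 1 pu' pa \<longrightarrow> K \<gamma> cu ca pu pa 1 \<le> K \<gamma> cu ca pu' pa 1"
      unfolding is_SPE_def by blast+
    from F1 have fp: "pu \<in> {0..1}" "pa \<in> {0..1}" using fe1 by blast+
    from A fp have "K \<gamma> cu ca pu 0 1 \<le> K \<gamma> cu ca pu pa 1" using fe1 by auto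
    hence "ca * pa \<le> 0" unfolding K1 by simp
    hence pa: "pa = 0" using fp assms(3) by (simp add: mult_le_0_iff)
    from U fp have "K \<gamma> cu ca pu pa 1 \<le> K \<gamma> cu ca 0 pa 1" using fe1 by auto
    hence "cu * pu \<le> 0" unfolding K1 by simp
    hence pu: "pu = 0" using fp assms(2) by (simp add: mult_le_0_iff)
    show ?thesis using pa pu s1 T by simp
  qed
  have bwd: "is_BGNE \<gamma> cu ca cs R 0 0 1 R"
    unfolding is_BGNE_def insurer_optimal_def is_SPE_def
  proof (intro conjI allI impI)
    show "insurer_feasible \<gamma> R 1 R" by (rule feas1)
    fix s' T' assume "insurer_feasible \<gamma> R s' T'"
    hence "s' \<le> 1" unfolding insurer_feasible_def by auto
    hence "0 \<le> \<gamma> * (1 - s') * R" using assms(1) Rpos by simp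
    moreover have "T' \<ge> s' * R" "s' \<ge> T' / R" using \<open>insurer_feasible \<gamma> R s' T'\<close>
      unfolding insurer_feasible_def by auto
    moreover hence "s' * R \<ge> T'" using Rpos by (simp add: divide_le_eq)
    ultimately show "J_ins \<gamma> cs R 1 R \<le> J_ins \<gamma> cs R s' T'" unfolding J_ins_def by simp
  next
    show "feasible_ua \<gamma> 1 0 0" using fe1 by simp
  next
    fix pa' assume "feasible_ua \<gamma> 1 0 pa'"
    thus "K \<gamma> cu ca 0 pa' 1 \<le> K \<gamma> cu ca 0 0 1" using fe1 K1 assms(3) by simp
  next
    fix pu' assume "feasible_ua \<gamma> 1 pu' 0"
    thus "K \<gamma> cu ca 0 0 1 \<le> K \<gamma> cu ca pu' 0 1" using fe1 K1 assms(2) by simp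
  qed
  show ?thesis
    using fwd bwd assms(5) by auto
qed

end
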